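(* Let $t_0<t_1<+\infty$ and let $a_{jk}(t),\ c_{jk}(t)$ ($j,k=1,2$) be complex-valued continuous functions on $[t_0;t_1)$ with $c_{11},c_{22}$ real-valued and $c_{21}=\overline{c}_{12}$, and let $b_1(t),b_2(t)$ be real-valued continuous functions with $b_j(t)>0$, $t\in[t_0;t_1)$, $j=1,2$. Assume that the functions $a_{12}(t)/b_1(t)$ and $\overline{a}_{21}(t)/b_2(t)$ are continuously differentiable on $[t_0;t_1)$. Let $z_{11}(t),z_{22}(t)$ be real-valued and $y(t),v(t)$ complex-valued continuously differentiable functions on $[t_0;t_1)$ satisfying, for $t\in[t_0;t_1)$, the system $$z_{11}'+b_1z_{11}^2+2(\mathrm{Re}\,a_{11})z_{11}+b_2|y|^2-\frac{|a_{21}|^2}{b_2}-c_{11}=0,$$ $$y'+\bigl[b_1z_{11}+b_2z_{22}+\overline{a}_{11}+a_{22}\bigr]y+\Bigl(a_{12}-\frac{b_1}{b_2}\overline{a}_{21}\Bigr)z_{11}-\Bigl(\frac{\overline{a}_{21}}{b_2}\Bigr)'-\frac{\overline{a}_{21}}{b_2}\bigl(\overline{a}_{11}+a_{22}\bigr)-c_{12}=0,$$ and the system $$z_{22}'+b_2z_{22}^2+2(\mathrm{Re}\,a_{22})z_{22}+b_1|v|^2-\frac{|a_{12}|^2}{b_1}-c_{22}=0,$$ $$v'+\bigl[b_1z_{11}+b_2z_{22}+\overline{a}_{11}+a_{22}\bigr]v+\Bigl(\overline{a}_{21}-\frac{b_2}{b_1}a_{12}\Bigr)z_{22}-\Bigl(\frac{a_{12}}{b_1}\Bigr)'-\frac{a_{12}}{b_1}\bigl(\overline{a}_{11}+a_{22}\bigr)-c_{12}=0,$$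 (all coefficients evaluated at $t$), and such that $z_{jj}(t)\ge0$ for $t\in[t_0;t_1)$, $j=1,2$, and $y(t_0)=v(t_0)=0$. Then for all $t\in[t_0;t_1)$ $$|y(t)|\le\mathfrak{M}(t)+\int_{t_0}^{t}\biggl|\exp\Bigl\{-\int_\tau^t\bigl(\overline{a}_{11}(s)+a_{22}(s)\bigr)ds\Bigr\}\Bigl[\Bigl(\frac{\overline{a}_{21}}{b_2}\Bigr)'(\tau)+\frac{\overline{a}_{21}(\tau)}{b_2(\tau)}\bigl(\overline{a}_{11}(\tau)+a_{22}(\tau)\bigr)+c_{12}(\tau)\Bigr]\biggr|d\tau,$$ $$|v(t)|\le\mathfrak{M}(t)+\int_{t_0}^{t}\biggl|\exp\Bigl\{-\int_\tau^t\bigl(\overline{a}_{11}(s)+a_{22}(s)\bigr)ds\Bigr\}\Bigl[\Bigl(\frac{a_{12}}{b_1}\Bigr)'(\tau)+\frac{a_{12}(\tau)}{b_1(\tau)}\bigl(\overline{a}_{11}(\tau)+a_{22}(\tau)\bigr)+c_{12}(\tau)\Bigr]\biggr|d\tau,$$ where $$\mathfrak{M}(t)=\max_{\tau\in[t_0;t]}\biggl|\exp\Bigl\{-\int_\tau^t\bigl(\overline{a}_{11}(s)+a_{22}(s)\bigr)ds\Bigr\}\Bigl(\frac{a_{12}(\tau)}{b_1(\tau)}-\frac{\overline{a}_{21}(\tau)}{b_2(\tau)}\Bigr)\biggr|.$$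
   Context: Overline denotes complex conjugation; $\mathrm{Re}$ denotes the real part. *)

theory Defs
  imports "HOL-Analysis.Analysis"
begin

definition expfac :: "(real \<Rightarrow> complex) \<Rightarrow> (real \<Rightarrow> complex) \<Rightarrow> real \<Rightarrow> real \<Rightarrow> complex" where
  "expfac a11 a22 \<tau> t = exp (- integral {\<tau>..t} (\<lambda>s. cnj (a11 s) + a22 s))"

text \<open>The quantity frak M(t): maximum over [t0,t] (attained by continuity and compactness,
  so written as a supremum).\<close>
definition frakM :: "(real \<Rightarrow> complex) \<Rightarrow> (real \<Rightarrow> complex) \<Rightarrow> (real \<Rightarrow> complex) \<Rightarrow> (real \<Rightarrow> complex)
    \<Rightarrow> (real \<Rightarrow> real) \<Rightarrow> (real \<Rightarrow> real) \<Rightarrow> real \<Rightarrow> real \<Rightarrow> real" where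
  "frakM a11 a12 a21 a22 b1 b2 t0 t =
     Sup ((\<lambda>\<tau>. cmod (expfac a11 a22 \<tau> t *
        (a12 \<tau> / complex_of_real (b1 \<tau>) - cnj (a21 \<tau>) / complex_of_real (b2 \<tau>)))) ` {t0..t})"

end

theory Submission
  imports Defs
begin

lemma core:
  fixes t0 t :: real and A F P y dy :: "real \<Rightarrow> complex" and Z W :: "real \<Rightarrow> real"
  assumes tt: "t0 \<le> t"
    and cA: "continuous_on {t0..t} A" and cF: "continuous_on {t0..t} F"
    and cP: "continuous_on {t0..t} P" and cZ: "continuous_on {t0..t} Z"
    and cW: "continuous_on {t0..t} W"
    and dy: "\<And>s. s \<in> {t0..t} \<Longrightarrow> (y has_vector_derivative dy s) (at s within {t0..t})"
    and W0: "\<And>s. s \<in> {t0..t} \<Longrightarrow> 0 \<le> W s" and WZ: "\<And>s. s \<in> {t0..t} \<Longrightarrow> W s \<le> Z s"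
    and eq: "\<And>s. s \<in> {t0..t} \<Longrightarrow> dy s = - (of_real (Z s) + A s) * y s - of_real (W s) * P s + F s"
    and y0: "y t0 = 0"
  shows "cmod (y t) \<le> Sup ((\<lambda>\<tau>. cmod (exp (- integral {\<tau>..t} A) * P \<tau>)) ` {t0..t})
     + integral {t0..t} (\<lambda>\<tau>. cmod (exp (- integral {\<tau>..t} A) * F \<tau>))"
proof -
  define HA where "HA \<tau> = integral {t0..\<tau>} A" for \<tau>
  define HZ where "HZ \<tau> = integral {t0..\<tau>} Z" for \<tau>
  define R where "R \<tau> = exp (HZ \<tau> - HZ t)" for \<tau>
  define EA where "EA \<tau> = exp (HA \<tau> - HA t)" for \<tau>
  define M where "M = Sup ((\<lambda>\<tau>. cmod (exp (- integral {\<tau>..t} A) * P \<tau>)) ` {t0..t})"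
  have EAeq: "EA \<tau> = exp (- integral {\<tau>..t} A)" if "\<tau> \<in> {t0..t}" for \<tau>
  proof -
    have "integral {t0..\<tau>} A + integral {\<tau>..t} A = integral {t0..t} A"
      by (rule Henstock_Kurzweil_Integration.integral_combine) (use that in \<open>auto intro: integrable_continuous_interval cA\<close>)
    then show ?thesis unfolding EA_def HA_def by (metis add_diff_cancel_left' minus_diff_eq)
  qed
  have cEA: "continuous_on {t0..t} EA"
    unfolding EA_def HA_def
    by (intro continuous_intros indefinite_integral_continuous_1 integrable_continuous_interval cA)
  have cR: "continuous_on {t0..t} R"
    unfolding R_def HZ_def
    by (intro continuous_intros indefinite_integral_continuous_1 integrable_continuous_interval cZ)
  have dHA: "(HA has_vector_derivative A s) (at s within {t0..t})" if "s \<in> {t0..t}" for s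
    unfolding HA_def by (rule integral_has_vector_derivative[OF cA that])
  have dHZ: "(HZ has_real_derivative Z s) (at s within {t0..t})" if "s \<in> {t0..t}" for s
    unfolding HZ_def has_real_derivative_iff_has_vector_derivative
    by (rule integral_has_vector_derivative[OF cZ that])
  have dR: "(R has_real_derivative R s * Z s) (at s within {t0..t})" if "s \<in> {t0..t}" for s
    unfolding R_def using dHZ[OF that]
    by (auto intro!: derivative_eq_intros)
  have dEA: "(EA has_vector_derivative A s * EA s) (at s within {t0..t})" if "s \<in> {t0..t}" for s
  proof -
    have "((exp \<circ> (\<lambda>u. HA u - HA t)) has_vector_derivative (A s * exp (HA s - HA t))) (at s within {t0..t})"
      by (rule field_vector_diff_chain_within) (auto intro!: derivative_eq_intros dHA[OF that])
    then show ?thesis unfolding EA_def o_def .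
  qed
  define K where "K \<tau> = of_real (R \<tau>) * EA \<tau> * y \<tau>" for \<tau>
  define k where "k \<tau> = of_real (R \<tau>) * EA \<tau> * (- of_real (W \<tau>) * P \<tau> + F \<tau>)" for \<tau>
  have dK: "(K has_vector_derivative k s) (at s within {t0..t})" if s: "s \<in> {t0..t}" for s
  proof -
    have "(K has_vector_derivative
        (of_real (R s) * EA s * dy s + (of_real (R s) * (A s * EA s) + of_real (R s * Z s) * EA s) * y s))
       (at s within {t0..t})"
      unfolding K_def
      by (intro has_vector_derivative_mult has_vector_derivative_of_real dR dEA dy s)
    moreover have "of_real (R s) * EA s * dy s + (of_real (R s) * (A s * EA s) + of_real (R s * Z s) * EA s) * y s = k s"
      unfolding k_def eq[OF s] by (simp add: algebra_simps)
    ultimately show ?thesis by simp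
  qed
  have "(k has_integral (K t - K t0)) {t0..t}"
    by (rule fundamental_theorem_of_calculus[OF tt dK])
  moreover have "K t = y t" "K t0 = 0" unfolding K_def R_def EA_def by (simp_all add: y0)
  ultimately have yint: "(k has_integral y t) {t0..t}" by simp
  have Z0: "0 \<le> Z s" if "s \<in> {t0..t}" for s using W0[OF that] WZ[OF that] by linarith
  have R1: "R s \<le> 1" if s: "s \<in> {t0..t}" for s
  proof -
    have "integral {t0..s} Z + integral {s..t} Z = integral {t0..t} Z"
      by (rule Henstock_Kurzweil_Integration.integral_combine) (use s in \<open>auto intro: integrable_continuous_interval cZ\<close>)
    moreover have "continuous_on {s..t} Z" using continuous_on_subset[OF cZ] s by auto
    then have "integral {s..t} Z \<ge> 0"
      by (intro integral_nonneg integrable_continuous_interval) (use s Z0 in auto)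
    ultimately have "HZ s \<le> HZ t" unfolding HZ_def by linarith
    then show ?thesis unfolding R_def by simp
  qed
  have R0: "R s > 0" for s unfolding R_def by simp
  have cfun: "continuous_on {t0..t} (\<lambda>\<tau>. cmod (exp (- integral {\<tau>..t} A) * P \<tau>))"
  proof -
    have "continuous_on {t0..t} (\<lambda>\<tau>. cmod (EA \<tau> * P \<tau>))"
      by (intro continuous_intros cEA cP)
    then show ?thesis by (rule continuous_on_cong[THEN iffD1, rotated 2]) (auto simp: EAeq)
  qed
  have bdd: "bdd_above ((\<lambda>\<tau>. cmod (exp (- integral {\<tau>..t} A) * P \<tau>)) ` {t0..t})"
    by (intro bounded_imp_bdd_above compact_imp_bounded compact_continuous_image cfun compact_Icc)
  have Mge: "cmod (EA s * P s) \<le> M" if s: "s \<in> {t0..t}" for s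
    unfolding M_def EAeq[OF s] by (rule cSup_upper[OF _ bdd]) (use s in auto)
  have M0: "0 \<le> M" using Mge[of t0] tt by (meson atLeastAtMost_iff norm_ge_zero order.trans order_refl)
  define g where "g \<tau> = R \<tau> * Z \<tau> * M + cmod (EA \<tau> * F \<tau>)" for \<tau>
  have kg: "cmod (k s) \<le> g s" if s: "s \<in> {t0..t}" for s
  proof -
    have "cmod (k s) = R s * cmod (- of_real (W s) * (EA s * P s) + EA s * F s)"
    proof -
      have "k s = of_real (R s) * (- of_real (W s) * (EA s * P s) + EA s * F s)"
        unfolding k_def by (simp add: algebra_simps)
      then show ?thesis using R0[of s] by (simp add: norm_mult)
    qed
    also have "\<dots> \<le> R s * (W s * cmod (EA s * P s) + cmod (EA s * F s))"
    proof -
      have "cmod (- of_real (W s) * (EA s * P s) + EA s * F s) \<le> cmod (- of_real (W s) * (EA s * P s)) + cmod (EA s * F s)"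
        by (rule norm_triangle_ineq)
      also have "cmod (- of_real (W s) * (EA s * P s)) = W s * cmod (EA s * P s)"
        using W0[OF s] by (simp only: norm_mult norm_minus_cancel mult_minus_left norm_of_real abs_of_nonneg)
      finally show ?thesis by (rule mult_left_mono[OF _ less_imp_le[OF R0[of s]]])
    qed
    also have "\<dots> \<le> R s * (Z s * M + cmod (EA s * F s))"
      using R0[of s] W0[OF s] WZ[OF s] Mge[OF s] M0
      by (intro mult_left_mono add_right_mono mult_mono) auto
    also have "\<dots> \<le> g s"
      unfolding g_def using R0[of s] R1[OF s] Z0[OF s] M0
      by (simp add: algebra_simps mult_left_le_one_le)
    finally show ?thesis .
  qed
  have intRZ: "((\<lambda>s. R s * Z s) has_integral (R t - R t0)) {t0..t}"
    by (rule fundamental_theorem_of_calculus[OF tt]) (use dR in \<open>auto simp: has_real_derivative_iff_has_vector_derivative\<close>)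
  have intEF: "(\<lambda>s. cmod (EA s * F s)) integrable_on {t0..t}"
    by (intro integrable_continuous_interval continuous_intros cEA cF)
  have intRZM: "(\<lambda>s. R s * Z s * M) integrable_on {t0..t}"
    by (rule integrable_on_mult_left[OF has_integral_integrable[OF intRZ]])
  have intg: "g integrable_on {t0..t}"
    unfolding g_def by (rule integrable_add[OF intRZM intEF])
  have "cmod (y t) \<le> integral {t0..t} g"
  proof -
    have "cmod (integral {t0..t} k) \<le> integral {t0..t} g"
      by (rule integral_norm_bound_integral[OF has_integral_integrable[OF yint] intg kg])
    then show ?thesis by (simp only: integral_unique[OF yint])
  qed
  also have "integral {t0..t} g = (R t - R t0) * M + integral {t0..t} (\<lambda>s. cmod (EA s * F s))"
  proof -
    have "integral {t0..t} g = integral {t0..t} (\<lambda>s. R s * Z s * M) + integral {t0..t} (\<lambda>s. cmod (EA s * F s))"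
      unfolding g_def by (rule integral_add[OF intRZM intEF])
    moreover have "integral {t0..t} (\<lambda>s. R s * Z s * M) = integral {t0..t} (\<lambda>s. R s * Z s) * M"
      by (rule integral_mult_left)
    ultimately show ?thesis by (simp only: integral_unique[OF intRZ])
  qed
  also have "\<dots> \<le> M + integral {t0..t} (\<lambda>s. cmod (EA s * F s))"
  proof -
    have "(R t - R t0) * M \<le> 1 * M"
      using R0[of t0] M0 by (intro mult_right_mono) (auto simp: R_def)
    then show ?thesis by simp
  qed
  also have "integral {t0..t} (\<lambda>s. cmod (EA s * F s)) = integral {t0..t} (\<lambda>\<tau>. cmod (exp (- integral {\<tau>..t} A) * F \<tau>))"
    by (rule integral_cong) (simp add: EAeq)
  finally show ?thesis unfolding M_def .
qed
theorem lemma2p2: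
  fixes t0 t1 :: real
    and a11 a12 a21 a22 c12 c21 :: "real \<Rightarrow> complex"
    and c11 c22 b1 b2 :: "real \<Rightarrow> real"
    and z11 z22 dz11 dz22 :: "real \<Rightarrow> real"
    and y v dy dv dp dq :: "real \<Rightarrow> complex"
  assumes t01: "t0 < t1"
    and cont: "continuous_on {t0..<t1} a11" "continuous_on {t0..<t1} a12"
      "continuous_on {t0..<t1} a21" "continuous_on {t0..<t1} a22"
      "continuous_on {t0..<t1} c11" "continuous_on {t0..<t1} c12"
      "continuous_on {t0..<t1} c21" "continuous_on {t0..<t1} c22"
      "continuous_on {t0..<t1} b1" "continuous_on {t0..<t1} b2"
    and c21: "\<And>t. t \<in> {t0..<t1} \<Longrightarrow> c21 t = cnj (c12 t)"
    and bpos: "\<And>t. t \<in> {t0..<t1} \<Longrightarrow> b1 t > 0" "\<And>t. t \<in> {t0..<t1} \<Longrightarrow> b2 t > 0"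
    and dp: "\<And>t. t \<in> {t0..<t1} \<Longrightarrow>
        ((\<lambda>s. a12 s / complex_of_real (b1 s)) has_vector_derivative dp t) (at t within {t0..<t1})"
      "continuous_on {t0..<t1} dp"
    and dq: "\<And>t. t \<in> {t0..<t1} \<Longrightarrow>
        ((\<lambda>s. cnj (a21 s) / complex_of_real (b2 s)) has_vector_derivative dq t) (at t within {t0..<t1})"
      "continuous_on {t0..<t1} dq"
    and dz11: "\<And>t. t \<in> {t0..<t1} \<Longrightarrow> (z11 has_real_derivative dz11 t) (at t within {t0..<t1})"
      "continuous_on {t0..<t1} dz11"
    and dz22: "\<And>t. t \<in> {t0..<t1} \<Longrightarrow> (z22 has_real_derivative dz22 t) (at t within {t0..<t1})"
      "continuous_on {t0..<t1} dz22"
    and dy: "\<And>t. t \<in> {t0..<t1} \<Longrightarrow> (y has_vector_derivative dy t) (at t within {t0..<t1})"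
      "continuous_on {t0..<t1} dy"
    and dv: "\<And>t. t \<in> {t0..<t1} \<Longrightarrow> (v has_vector_derivative dv t) (at t within {t0..<t1})"
      "continuous_on {t0..<t1} dv"
    and eq1: "\<And>t. t \<in> {t0..<t1} \<Longrightarrow>
        dz11 t + b1 t * (z11 t)\<^sup>2 + 2 * Re (a11 t) * z11 t + b2 t * (cmod (y t))\<^sup>2
        - (cmod (a21 t))\<^sup>2 / b2 t - c11 t = 0"
    and eq2: "\<And>t. t \<in> {t0..<t1} \<Longrightarrow>
        dy t + (complex_of_real (b1 t * z11 t + b2 t * z22 t) + cnj (a11 t) + a22 t) * y t
        + (a12 t - complex_of_real (b1 t / b2 t) * cnj (a21 t)) * complex_of_real (z11 t)
        - dq t - cnj (a21 t) / complex_of_real (b2 t) * (cnj (a11 t) + a22 t) - c12 t = 0"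
    and eq3: "\<And>t. t \<in> {t0..<t1} \<Longrightarrow>
        dz22 t + b2 t * (z22 t)\<^sup>2 + 2 * Re (a22 t) * z22 t + b1 t * (cmod (v t))\<^sup>2
        - (cmod (a12 t))\<^sup>2 / b1 t - c22 t = 0"
    and eq4: "\<And>t. t \<in> {t0..<t1} \<Longrightarrow>
        dv t + (complex_of_real (b1 t * z11 t + b2 t * z22 t) + cnj (a11 t) + a22 t) * v t
        + (cnj (a21 t) - complex_of_real (b2 t / b1 t) * a12 t) * complex_of_real (z22 t)
        - dp t - a12 t / complex_of_real (b1 t) * (cnj (a11 t) + a22 t) - c12 t = 0"
    and znonneg: "\<And>t. t \<in> {t0..<t1} \<Longrightarrow> z11 t \<ge> 0" "\<And>t. t \<in> {t0..<t1} \<Longrightarrow> z22 t \<ge> 0"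
    and init: "y t0 = 0" "v t0 = 0"
  shows "\<forall>t \<in> {t0..<t1}.
      cmod (y t) \<le> frakM a11 a12 a21 a22 b1 b2 t0 t
        + integral {t0..t} (\<lambda>\<tau>. cmod (expfac a11 a22 \<tau> t *
            (dq \<tau> + cnj (a21 \<tau>) / complex_of_real (b2 \<tau>) * (cnj (a11 \<tau>) + a22 \<tau>) + c12 \<tau>)))
    \<and> cmod (v t) \<le> frakM a11 a12 a21 a22 b1 b2 t0 t
        + integral {t0..t} (\<lambda>\<tau>. cmod (expfac a11 a22 \<tau> t *
            (dp \<tau> + a12 \<tau> / complex_of_real (b1 \<tau>) * (cnj (a11 \<tau>) + a22 \<tau>) + c12 \<tau>)))"
proof (intro ballI)
  fix t assume t: "t \<in> {t0..<t1}"
  have tt: "t0 \<le> t" and sub: "{t0..t} \<subseteq> {t0..<t1}" using t by auto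
  have cs: "continuous_on {t0..t} f" if "continuous_on {t0..<t1} f" for f :: "real \<Rightarrow> 'z::topological_space"
    using continuous_on_subset[OF that sub] .
  have b1nz: "complex_of_real (b1 s) \<noteq> 0" "b1 s \<noteq> 0" if "s \<in> {t0..t}" for s using bpos(1)[of s] that sub by auto
  have b2nz: "complex_of_real (b2 s) \<noteq> 0" "b2 s \<noteq> 0" if "s \<in> {t0..t}" for s using bpos(2)[of s] that sub by auto
  have cz11: "continuous_on {t0..<t1} z11"
    unfolding continuous_on_eq_continuous_within by (intro ballI DERIV_continuous[OF dz11(1)])
  have cz22: "continuous_on {t0..<t1} z22"
    unfolding continuous_on_eq_continuous_within by (intro ballI DERIV_continuous[OF dz22(1)])
  define A where "A s = cnj (a11 s) + a22 s" for s
  define Z where "Z s = b1 s * z11 s + b2 s * z22 s" for s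
  have cA: "continuous_on {t0..t} A" unfolding A_def
    by (intro continuous_intros cs cont)
  have cZ: "continuous_on {t0..t} Z" unfolding Z_def
    by (intro continuous_intros cs cont cz11 cz22)
  have cpq: "continuous_on {t0..t} (\<lambda>s. a12 s / complex_of_real (b1 s))"
       "continuous_on {t0..t} (\<lambda>s. cnj (a21 s) / complex_of_real (b2 s))"
    by (intro continuous_intros cs cont; use b1nz b2nz in auto)+
  have yb: "cmod (y t) \<le> frakM a11 a12 a21 a22 b1 b2 t0 t
        + integral {t0..t} (\<lambda>\<tau>. cmod (expfac a11 a22 \<tau> t *
            (dq \<tau> + cnj (a21 \<tau>) / complex_of_real (b2 \<tau>) * (cnj (a11 \<tau>) + a22 \<tau>) + c12 \<tau>)))"
    unfolding frakM_def expfac_def A_def[symmetric]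
  proof (rule core[where Z=Z and W="\<lambda>s. b1 s * z11 s" and dy=dy])
    show "continuous_on {t0..t} (\<lambda>\<tau>. dq \<tau> + cnj (a21 \<tau>) / complex_of_real (b2 \<tau>) * A \<tau> + c12 \<tau>)"
      by (intro continuous_intros cs cont dq(2) cA cpq(2))
    show "continuous_on {t0..t} (\<lambda>\<tau>. a12 \<tau> / complex_of_real (b1 \<tau>) - cnj (a21 \<tau>) / complex_of_real (b2 \<tau>))"
      by (intro continuous_intros cpq)
    show "continuous_on {t0..t} (\<lambda>s. b1 s * z11 s)"
      by (intro continuous_intros cs cont cz11)
    show "(y has_vector_derivative dy s) (at s within {t0..t})" if "s \<in> {t0..t}" for s
    proof -
      have "s \<in> {t0..<t1}" using that sub by auto
      from has_vector_derivative_within_subset[OF dy(1)[OF this] sub] show ?thesis .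
    qed
    show "0 \<le> b1 s * z11 s" if "s \<in> {t0..t}" for s
      using bpos(1)[of s] znonneg(1)[of s] that sub by auto
    show "b1 s * z11 s \<le> Z s" if "s \<in> {t0..t}" for s
      using bpos(2)[of s] znonneg(2)[of s] that sub unfolding Z_def by auto
    show "dy s = - (complex_of_real (Z s) + A s) * y s - complex_of_real (b1 s * z11 s) *
        (a12 s / complex_of_real (b1 s) - cnj (a21 s) / complex_of_real (b2 s)) +
        (dq s + cnj (a21 s) / complex_of_real (b2 s) * A s + c12 s)" if s: "s \<in> {t0..t}" for s
    proof -
      have "(a12 s - complex_of_real (b1 s / b2 s) * cnj (a21 s)) * complex_of_real (z11 s)
          = complex_of_real (b1 s * z11 s) * (a12 s / complex_of_real (b1 s) - cnj (a21 s) / complex_of_real (b2 s))"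
        using b1nz[OF s] b2nz[OF s] by (simp add: field_simps)
      then show ?thesis using eq2[of s] s sub unfolding A_def Z_def
        by (auto simp: algebra_simps)
    qed
  qed (use tt cA cZ init in auto)
  have vb: "cmod (v t) \<le> frakM a11 a12 a21 a22 b1 b2 t0 t
        + integral {t0..t} (\<lambda>\<tau>. cmod (expfac a11 a22 \<tau> t *
            (dp \<tau> + a12 \<tau> / complex_of_real (b1 \<tau>) * (cnj (a11 \<tau>) + a22 \<tau>) + c12 \<tau>)))"
  proof -
    have h1: "cmod (v t) \<le> Sup ((\<lambda>\<tau>. cmod (exp (- integral {\<tau>..t} A) *
          (cnj (a21 \<tau>) / complex_of_real (b2 \<tau>) - a12 \<tau> / complex_of_real (b1 \<tau>)))) ` {t0..t})
        + integral {t0..t} (\<lambda>\<tau>. cmod (exp (- integral {\<tau>..t} A) *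
            (dp \<tau> + a12 \<tau> / complex_of_real (b1 \<tau>) * A \<tau> + c12 \<tau>)))"
    proof (rule core[where Z=Z and W="\<lambda>s. b2 s * z22 s" and dy=dv])
      show "continuous_on {t0..t} (\<lambda>\<tau>. dp \<tau> + a12 \<tau> / complex_of_real (b1 \<tau>) * A \<tau> + c12 \<tau>)"
        by (intro continuous_intros cs cont dp(2) cA cpq(1))
      show "continuous_on {t0..t} (\<lambda>\<tau>. cnj (a21 \<tau>) / complex_of_real (b2 \<tau>) - a12 \<tau> / complex_of_real (b1 \<tau>))"
        by (intro continuous_intros cpq)
      show "continuous_on {t0..t} (\<lambda>s. b2 s * z22 s)"
        by (intro continuous_intros cs cont cz22)
      show "(v has_vector_derivative dv s) (at s within {t0..t})" if "s \<in> {t0..t}" for s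
      proof -
      have "s \<in> {t0..<t1}" using that sub by auto
      from has_vector_derivative_within_subset[OF dv(1)[OF this] sub] show ?thesis .
    qed
      show "0 \<le> b2 s * z22 s" if "s \<in> {t0..t}" for s
        using bpos(2)[of s] znonneg(2)[of s] that sub by auto
      show "b2 s * z22 s \<le> Z s" if "s \<in> {t0..t}" for s
        using bpos(1)[of s] znonneg(1)[of s] that sub unfolding Z_def by auto
      show "dv s = - (complex_of_real (Z s) + A s) * v s - complex_of_real (b2 s * z22 s) *
          (cnj (a21 s) / complex_of_real (b2 s) - a12 s / complex_of_real (b1 s)) +
          (dp s + a12 s / complex_of_real (b1 s) * A s + c12 s)" if s: "s \<in> {t0..t}" for s
      proof -
        have "(cnj (a21 s) - complex_of_real (b2 s / b1 s) * a12 s) * complex_of_real (z22 s)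
            = complex_of_real (b2 s * z22 s) * (cnj (a21 s) / complex_of_real (b2 s) - a12 s / complex_of_real (b1 s))"
          using b1nz[OF s] b2nz[OF s] by (simp add: field_simps)
        then show ?thesis using eq4[of s] s sub unfolding A_def Z_def
          by (auto simp: algebra_simps)
      qed
    qed (use tt cA cZ init in auto)
    have fe: "(\<lambda>\<tau>. cmod (exp (- integral {\<tau>..t} A) *
          (cnj (a21 \<tau>) / complex_of_real (b2 \<tau>) - a12 \<tau> / complex_of_real (b1 \<tau>))))
        = (\<lambda>\<tau>. cmod (exp (- integral {\<tau>..t} A) *
          (a12 \<tau> / complex_of_real (b1 \<tau>) - cnj (a21 \<tau>) / complex_of_real (b2 \<tau>))))"
      by (rule ext) (simp only: norm_mult norm_minus_commute)
    show ?thesis using h1 unfolding fe unfolding frakM_def expfac_def A_def .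
  qed
  show "cmod (y t) \<le> frakM a11 a12 a21 a22 b1 b2 t0 t
        + integral {t0..t} (\<lambda>\<tau>. cmod (expfac a11 a22 \<tau> t *
            (dq \<tau> + cnj (a21 \<tau>) / complex_of_real (b2 \<tau>) * (cnj (a11 \<tau>) + a22 \<tau>) + c12 \<tau>)))
    \<and> cmod (v t) \<le> frakM a11 a12 a21 a22 b1 b2 t0 t
        + integral {t0..t} (\<lambda>\<tau>. cmod (expfac a11 a22 \<tau> t *
            (dp \<tau> + a12 \<tau> / complex_of_real (b1 \<tau>) * (cnj (a11 \<tau>) + a22 \<tau>) + c12 \<tau>)))"
    using yb vb by blast
qed

end
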